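(* Let $r\ge 2$, $n\ge 1$, $k\ge 1$ be integers and $s:[n]\to\{0,1,\dots,r-1\}$. Let $\mathrm{Supp}(s)=\{i\in[n]: s(i)>0\}$ and let $I\subseteq\mathrm{Supp}(s)$ with $|I|\ge k$. Let $C^I$ be the subcomplex of $C_s(n,k,\dots,k)$ ($k$ repeated $r$ times) induced on the vertices $(A_1,\dots,A_r)$ with $I\subseteq A_1$. Define $s'(i)=s(i)-1$ for $i\in I$ and $s'(i)=s(i)$ for $i\notin I$. Then $C^I$ is homotopy equivalent to $C_{s'}(n,k,\dots,k)$ with $k$ repeated $r-1$ times.
   Context: For $m\ge 1$, $t:[n]\to\{0,\dots,m\}$ and integers $k_1,\dots,k_m\ge 0$, the complex $C_t(n,k_1,\dots,k_m)$ has as vertices the $m$-tuples $(A_1,\dots,A_m)$ of subsets of $[n]$ with $|A_j|\ge k_j$ for all $j$ such that each $x\in[n]$ lies in exactly $t(x)$ of the $A_j$; a set of vertices $\{(A_1^i,\dots,A_m^i)\}_{i\in I}$ is a face iff $|\bigcap_{i\in I}A_j^i|\ge k_j$ for all $j$. Homotopy equivalence refers to geometric realizations. *)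

theory Defs
  imports "HOL-Analysis.Analysis"
begin

(* Abstract simplicial complexes are given as sets of faces (finite nonempty vertex sets).
   Geometric realization: barycentric-coordinate functions whose support is a face,
   with the product (pointwise) topology on 'v => real. *)
definition realization :: "'v set set \<Rightarrow> ('v \<Rightarrow> real) set" where
  "realization K = {f. (\<forall>v. 0 \<le> f v) \<and> {v. f v \<noteq> 0} \<in> K \<and> sum f {v. f v \<noteq> 0} = 1}"

definition geom_real :: "'v set set \<Rightarrow> ('v \<Rightarrow> real) topology" where
  "geom_real K = subtopology (powertop_real UNIV) (realization K)"

(* A vertex (A_1,...,A_m) is the list [A_1,...,A_m]; [n] = {1..n}; ks = [k_1,...,k_m]. *)
definition C_vertices :: "nat \<Rightarrow> (nat \<Rightarrow> nat) \<Rightarrow> nat \<Rightarrow> nat list \<Rightarrow> nat set list set" where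
  "C_vertices m t n ks = {As. length As = m \<and>
      (\<forall>j<m. As ! j \<subseteq> {1..n} \<and> ks ! j \<le> card (As ! j)) \<and>
      (\<forall>x\<in>{1..n}. card {j. j < m \<and> x \<in> As ! j} = t x)}"

definition C_complex :: "nat \<Rightarrow> (nat \<Rightarrow> nat) \<Rightarrow> nat \<Rightarrow> nat list \<Rightarrow> nat set list set set" where
  "C_complex m t n ks = {F. finite F \<and> F \<noteq> {} \<and> F \<subseteq> C_vertices m t n ks \<and>
      (\<forall>j<m. ks ! j \<le> card (\<Inter>As\<in>F. As ! j))}"

definition induced_subcomplex :: "'v set set \<Rightarrow> 'v set \<Rightarrow> 'v set set" where
  "induced_subcomplex K W = {F \<in> K. F \<subseteq> W}"

end

theory Submission
  imports Defs
begin


definition push :: "('a \<Rightarrow> 'b) \<Rightarrow> ('a \<Rightarrow> real) \<Rightarrow> 'b \<Rightarrow> real" where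
  "push h \<phi> = (\<lambda>w. sum \<phi> {v. \<phi> v \<noteq> 0 \<and> h v = w})"

lemma topspace_geom_real[simp]: "topspace (geom_real K) = realization K"
  by (simp add: geom_real_def)

lemma push_realization:
  assumes phi: "\<phi> \<in> realization K" and fin: "\<forall>\<sigma>\<in>K. finite \<sigma>" and hL: "\<forall>\<sigma>\<in>K. h ` \<sigma> \<in> L"
  shows "push h \<phi> \<in> realization L \<and> {w. push h \<phi> w \<noteq> 0} = h ` {v. \<phi> v \<noteq> 0}"
proof -
  define S where "S = {v. \<phi> v \<noteq> 0}"
  have SK: "S \<in> K" and nn: "\<And>v. 0 \<le> \<phi> v" and s1: "sum \<phi> S = 1"
    using phi by (auto simp: realization_def S_def)
  have finS: "finite S" using fin SK by auto
  have pos: "\<And>v. v \<in> S \<Longrightarrow> 0 < \<phi> v" using nn by (force simp: S_def order_le_less)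
  have pe: "push h \<phi> w = sum \<phi> {v\<in>S. h v = w}" for w
    by (simp add: push_def S_def)
  have supp: "{w. push h \<phi> w \<noteq> 0} = h ` S"
  proof (intro set_eqI iffI)
    fix w assume "w \<in> {w. push h \<phi> w \<noteq> 0}"
    then have "sum \<phi> {v\<in>S. h v = w} \<noteq> 0" by (simp add: pe)
    then have "{v\<in>S. h v = w} \<noteq> {}" by (metis sum.empty)
    then show "w \<in> h ` S" by blast
  next
    fix w assume "w \<in> h ` S"
    then obtain v where "v \<in> S" "h v = w" by auto
    then have "0 < sum \<phi> {v\<in>S. h v = w}"
      using finS pos by (intro sum_pos) auto
    then show "w \<in> {w. push h \<phi> w \<noteq> 0}" by (simp add: pe)
  qed
  have "sum (push h \<phi>) (h ` S) = sum \<phi> S"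
    using sum.image_gen[OF finS, of \<phi> h] by (simp add: pe)
  then have "sum (push h \<phi>) {w. push h \<phi> w \<noteq> 0} = 1" using supp s1 by simp
  moreover have "\<forall>w. 0 \<le> push h \<phi> w" using nn by (simp add: pe sum_nonneg)
  moreover have "{w. push h \<phi> w \<noteq> 0} \<in> L" using supp SK hL by auto
  ultimately show ?thesis using supp by (simp add: realization_def S_def)
qed

lemma push_continuous:
  assumes finV: "finite V" and KV: "\<forall>\<sigma>\<in>K. \<sigma> \<subseteq> V" and hL: "\<forall>\<sigma>\<in>K. h ` \<sigma> \<in> L"
  shows "continuous_map (geom_real K) (geom_real L) (push h)"
proof -
  have fin: "\<forall>\<sigma>\<in>K. finite \<sigma>" using finV KV finite_subset by blast
  have "continuous_map (geom_real K) euclideanreal (\<lambda>\<phi>. push h \<phi> w)" for w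
  proof (rule continuous_map_eq)
    show "continuous_map (geom_real K) euclideanreal (\<lambda>\<phi>. sum \<phi> {v\<in>V. h v = w})"
      unfolding geom_real_def
      by (intro continuous_map_sum continuous_map_from_subtopology continuous_map_product_projection) 
         (auto simp: finV)
  next
    fix \<phi> assume "\<phi> \<in> topspace (geom_real K)"
    then have "\<phi> \<in> realization K" by simp
    then have "{v. \<phi> v \<noteq> 0} \<subseteq> V" using KV by (auto simp: realization_def)
    then show "sum \<phi> {v\<in>V. h v = w} = push h \<phi> w"
      unfolding push_def using finV by (intro sum.mono_neutral_right) auto
  qed
  then have "continuous_map (geom_real K) (powertop_real UNIV) (push h)"
    by (simp add: continuous_map_componentwise_UNIV)
  moreover have "push h \<in> topspace (geom_real K) \<rightarrow> realization L"
    using push_realization[OF _ fin hL] by auto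
  ultimately show ?thesis
    by (simp add: geom_real_def continuous_map_in_subtopology)
qed

lemma straight_homotopy:
  assumes fin: "\<forall>\<sigma>\<in>K. finite \<sigma>"
    and pc: "continuous_map (geom_real K) (geom_real K) p"
    and pK: "\<forall>\<phi>\<in>realization K. p \<phi> \<in> realization K \<and> {v. p \<phi> v \<noteq> 0} \<union> {v. \<phi> v \<noteq> 0} \<in> K"
  shows "homotopic_with (\<lambda>x. True) (geom_real K) (geom_real K) p id"
  unfolding homotopic_with_def
proof (intro exI conjI allI ballI)
  define H where "H = (\<lambda>z::real \<times> ('a \<Rightarrow> real). (\<lambda>v. (1 - fst z) * p (snd z) v + fst z * snd z v))"
  show "H (0, x) = p x" for x by (simp add: H_def)
  show "H (1, x) = id x" for x by (simp add: H_def)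
  show True by simp
  have c1: "continuous_map (prod_topology (top_of_set {0..1}) (geom_real K)) euclideanreal (\<lambda>z. H z v)" for v
  proof -
    have f: "continuous_map (prod_topology (top_of_set {0..1::real}) (geom_real K)) euclideanreal fst"
      by (metis continuous_map_fst continuous_map_from_subtopology continuous_map_id continuous_map_compose id_comp)
    have pv: "continuous_map (geom_real K) euclideanreal (\<lambda>\<phi>. \<phi> v)"
      unfolding geom_real_def
      by (intro continuous_map_from_subtopology continuous_map_product_projection) auto
    have ppv: "continuous_map (geom_real K) euclideanreal (\<lambda>\<phi>. p \<phi> v)"
      using continuous_map_compose[OF pc pv] by (simp add: o_def)
    have s1: "continuous_map (prod_topology (top_of_set {0..1::real}) (geom_real K)) euclideanreal (\<lambda>z. snd z v)"
      using continuous_map_compose[OF continuous_map_snd pv] by (simp add: o_def)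
    have s2: "continuous_map (prod_topology (top_of_set {0..1::real}) (geom_real K)) euclideanreal (\<lambda>z. p (snd z) v)"
      using continuous_map_compose[OF continuous_map_snd ppv] by (simp add: o_def)
    show ?thesis unfolding H_def
      by (intro continuous_map_add continuous_map_real_mult continuous_map_diff f s1 s2 continuous_map_const[THEN iffD2]) auto
  qed
  have "H z \<in> realization K" if zin: "z \<in> topspace (prod_topology (top_of_set {0..1}) (geom_real K))" for z
  proof -
    obtain t \<phi> where z: "z = (t, \<phi>)" and t: "0 \<le> t" "t \<le> 1" and phi: "\<phi> \<in> realization K"
      using zin by (cases z) auto
    have pphi: "p \<phi> \<in> realization K" and U: "{v. p \<phi> v \<noteq> 0} \<union> {v. \<phi> v \<noteq> 0} \<in> K"
      using pK phi by auto
    have nn1: "\<And>v. 0 \<le> \<phi> v" and nn2: "\<And>v. 0 \<le> p \<phi> v"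
      using phi pphi by (auto simp: realization_def)
    have S1: "{v. \<phi> v \<noteq> 0} \<in> K" "sum \<phi> {v. \<phi> v \<noteq> 0} = 1"
      using phi by (auto simp: realization_def)
    have S2: "{v. p \<phi> v \<noteq> 0} \<in> K" "sum (p \<phi>) {v. p \<phi> v \<noteq> 0} = 1"
      using pphi by (auto simp: realization_def)
    define U where "U = {v. p \<phi> v \<noteq> 0} \<union> {v. \<phi> v \<noteq> 0}"
    have finU: "finite U" using U fin U_def by auto
    have Hz: "H z = (\<lambda>v. (1 - t) * p \<phi> v + t * \<phi> v)" by (simp add: H_def z)
    have nn: "0 \<le> H z v" for v unfolding Hz using t nn1 nn2 by simp
    have supp: "{v. H z v \<noteq> 0} = (if t = 0 then {v. p \<phi> v \<noteq> 0} else if t = 1 then {v. \<phi> v \<noteq> 0} else U)"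
    proof -
      have "H z v \<noteq> 0 \<longleftrightarrow> (t < 1 \<and> p \<phi> v \<noteq> 0) \<or> (0 < t \<and> \<phi> v \<noteq> 0)" for v
      proof -
        have a: "0 \<le> (1 - t) * p \<phi> v" "0 \<le> t * \<phi> v" using t nn1 nn2 by auto
        have "H z v = 0 \<longleftrightarrow> (1 - t) * p \<phi> v = 0 \<and> t * \<phi> v = 0" unfolding Hz using a by linarith
        then show ?thesis using t by auto
      qed
      then show ?thesis using t by (auto simp: U_def)
    qed
    have suppK: "{v. H z v \<noteq> 0} \<in> K" using supp S1 S2 U U_def by auto
    have sub: "{v. H z v \<noteq> 0} \<subseteq> U" using supp U_def by auto
    have "sum (H z) {v. H z v \<noteq> 0} = sum (H z) U"
      using finU sub by (intro sum.mono_neutral_left) auto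
    also have "\<dots> = (1 - t) * sum (p \<phi>) U + t * sum \<phi> U"
      unfolding Hz by (simp add: sum.distrib sum_distrib_left)
    also have "sum (p \<phi>) U = 1"
    proof -
      have "sum (p \<phi>) U = sum (p \<phi>) {v. p \<phi> v \<noteq> 0}"
        using finU by (intro sum.mono_neutral_right) (auto simp: U_def)
      then show ?thesis using S2 by simp
    qed
    also have "sum \<phi> U = 1"
    proof -
      have "sum \<phi> U = sum \<phi> {v. \<phi> v \<noteq> 0}"
        using finU by (intro sum.mono_neutral_right) (auto simp: U_def)
      then show ?thesis using S1 by simp
    qed
    finally have "sum (H z) {v. H z v \<noteq> 0} = 1" by simp
    then show ?thesis using nn suppK by (simp add: realization_def)
  qed
  then show "continuous_map (prod_topology (top_of_set {0..1}) (geom_real K)) (geom_real K) H"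
    using c1 unfolding geom_real_def
    by (auto simp: continuous_map_in_subtopology continuous_map_componentwise_UNIV)
qed


lemma simplicial_htpy_equiv:
  assumes finV: "finite V" and KV: "\<forall>\<sigma>\<in>K. \<sigma> \<subseteq> V"
    and finW: "finite W" and LW: "\<forall>\<tau>\<in>L. \<tau> \<subseteq> W"
    and fK: "\<forall>\<sigma>\<in>K. f ` \<sigma> \<in> L" and gL: "\<forall>\<tau>\<in>L. g ` \<tau> \<in> K"
    and fg: "\<forall>\<tau>\<in>L. \<forall>w\<in>\<tau>. f (g w) = w"
    and cont: "\<forall>\<sigma>\<in>K. g ` f ` \<sigma> \<union> \<sigma> \<in> K"
  shows "geom_real K homotopy_equivalent_space geom_real L"
proof -
  have finK: "\<forall>\<sigma>\<in>K. finite \<sigma>" using finV KV finite_subset by blast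
  have finL: "\<forall>\<tau>\<in>L. finite \<tau>" using finW LW finite_subset by blast
  have cF: "continuous_map (geom_real K) (geom_real L) (push f)"
    using push_continuous[OF finV KV fK] .
  have cG: "continuous_map (geom_real L) (geom_real K) (push g)"
    using push_continuous[OF finW LW gL] .
  have h1: "homotopic_with (\<lambda>x. True) (geom_real K) (geom_real K) (push g \<circ> push f) id"
  proof (rule straight_homotopy[OF finK continuous_map_compose[OF cF cG]], intro ballI)
    fix \<phi> assume phi: "\<phi> \<in> realization K"
    have a: "push f \<phi> \<in> realization L" "{w. push f \<phi> w \<noteq> 0} = f ` {v. \<phi> v \<noteq> 0}"
      using push_realization[OF phi finK fK] by auto
    have b: "push g (push f \<phi>) \<in> realization K" "{w. push g (push f \<phi>) w \<noteq> 0} = g ` f ` {v. \<phi> v \<noteq> 0}"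
      using push_realization[OF a(1) finL gL] a(2) by auto
    have "{v. \<phi> v \<noteq> 0} \<in> K" using phi by (simp add: realization_def)
    then show "(push g \<circ> push f) \<phi> \<in> realization K \<and>
      {v. (push g \<circ> push f) \<phi> v \<noteq> 0} \<union> {v. \<phi> v \<noteq> 0} \<in> K"
      using b cont by auto
  qed
  have h2: "homotopic_with (\<lambda>x. True) (geom_real L) (geom_real L) (push f \<circ> push g) id"
  proof (rule straight_homotopy[OF finL continuous_map_compose[OF cG cF]], intro ballI)
    fix \<phi> assume phi: "\<phi> \<in> realization L"
    have a: "push g \<phi> \<in> realization K" "{w. push g \<phi> w \<noteq> 0} = g ` {v. \<phi> v \<noteq> 0}"
      using push_realization[OF phi finL gL] by auto
    have b: "push f (push g \<phi>) \<in> realization L" "{w. push f (push g \<phi>) w \<noteq> 0} = f ` g ` {v. \<phi> v \<noteq> 0}"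
      using push_realization[OF a(1) finK fK] a(2) by auto
    have S: "{v. \<phi> v \<noteq> 0} \<in> L" using phi by (simp add: realization_def)
    then have "f ` g ` {v. \<phi> v \<noteq> 0} = {v. \<phi> v \<noteq> 0}"
      using fg by (force simp: image_image)
    then show "(push f \<circ> push g) \<phi> \<in> realization L \<and>
      {v. (push f \<circ> push g) \<phi> v \<noteq> 0} \<union> {v. \<phi> v \<noteq> 0} \<in> L"
      using b S by auto
  qed
  show ?thesis unfolding homotopy_equivalent_space_def
    using cF cG h1 h2 by blast
qed



lemma card_shift:
  "card {j. j < Suc m \<and> P j} = (if P 0 then 1 else 0) + card {j. j < m \<and> P (Suc j)}"
proof -
  have e: "{j. j < Suc m \<and> P j} = (if P 0 then {0} else {}) \<union> Suc ` {j. j < m \<and> P (Suc j)}"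
    by (auto simp: less_Suc_eq_0_disj image_iff)
  have "card ((if P 0 then {0} else {}) \<union> Suc ` {j. j < m \<and> P (Suc j)}) =
        card (if P 0 then {0::nat} else {}) + card (Suc ` {j. j < m \<and> P (Suc j)})"
    by (intro card_Un_disjoint) auto
  also have "card (Suc ` {j. j < m \<and> P (Suc j)}) = card {j. j < m \<and> P (Suc j)}"
    by (intro card_image) auto
  finally show ?thesis using e by simp
qed

definition fgap :: "nat \<Rightarrow> nat set list \<Rightarrow> nat \<Rightarrow> nat" where
  "fgap r As x = (LEAST j. 0 < j \<and> j < r \<and> x \<notin> As ! j)"

definition fmap :: "nat \<Rightarrow> nat set \<Rightarrow> nat set list \<Rightarrow> nat set list" where
  "fmap r I As = map (\<lambda>j. As ! (Suc j) \<union> {x \<in> As ! 0 - I. fgap r As x = Suc j}) [0..<r-1]"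

lemma finite_C_vertices: "finite (C_vertices m t n ks)"
proof -
  have "C_vertices m t n ks \<subseteq> {As. set As \<subseteq> Pow {1..n} \<and> length As = m}"
    by (fastforce simp: C_vertices_def in_set_conv_nth)
  moreover have "finite {As. set As \<subseteq> Pow {1..n} \<and> length As = m}"
    by (intro finite_lists_length_eq) auto
  ultimately show ?thesis by (rule finite_subset)
qed

context
  fixes r n k :: nat and s :: "nat \<Rightarrow> nat" and I :: "nat set"
  assumes r2: "r \<ge> 2" and k1: "k \<ge> 1"
    and sr: "\<forall>i\<in>{1..n}. s i \<le> r - 1"
    and Is: "I \<subseteq> {i\<in>{1..n}. s i > 0}"
    and cI: "card I \<ge> k"
begin

abbreviation "s' \<equiv> (\<lambda>i. if i \<in> I then s i - 1 else s i)"

lemma fmap_vertex: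
  assumes As: "As \<in> C_vertices r s n (replicate r k)" and IA: "I \<subseteq> As ! 0"
  shows "fmap r I As \<in> C_vertices (r - 1) s' n (replicate (r - 1) k)"
proof -
  have len: "length As = r" and sub: "\<And>j. j < r \<Longrightarrow> As ! j \<subseteq> {1..n}"
    and cd: "\<And>j. j < r \<Longrightarrow> k \<le> card (As ! j)"
    and cnt: "\<And>x. x \<in> {1..n} \<Longrightarrow> card {j. j < r \<and> x \<in> As ! j} = s x"
    using As by (auto simp: C_vertices_def)
  have r1: "r = Suc (r - 1)" using r2 by simp
  have nth: "fmap r I As ! j = As ! (Suc j) \<union> {x \<in> As ! 0 - I. fgap r As x = Suc j}" if "j < r - 1" for j
    using that by (simp add: fmap_def)
  have c1: "fmap r I As ! j \<subseteq> {1..n} \<and> k \<le> card (fmap r I As ! j)" if j: "j < r - 1" for j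
  proof
    show su: "fmap r I As ! j \<subseteq> {1..n}" using sub[of 0] sub[of "Suc j"] j r2 by (auto simp: nth[OF j])
    have "finite (fmap r I As ! j)" using su by (rule finite_subset) simp
    then have "card (As ! Suc j) \<le> card (fmap r I As ! j)"
      by (intro card_mono) (auto simp: nth[OF j])
    then show "k \<le> card (fmap r I As ! j)" using cd[of "Suc j"] j by linarith
  qed
  have c2: "card {j. j < r - 1 \<and> x \<in> fmap r I As ! j} = s' x" if x: "x \<in> {1..n}" for x
  proof -
    have sh: "s x = (if x \<in> As ! 0 then 1 else 0) + card {j. j < r - 1 \<and> x \<in> As ! Suc j}"
      using cnt[OF x] card_shift[of "r - 1" "\<lambda>j. x \<in> As ! j"] r1 by simp
    show ?thesis
    proof (cases "x \<in> As ! 0 \<and> x \<notin> I")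
      case False
      then have "{j. j < r - 1 \<and> x \<in> fmap r I As ! j} = {j. j < r - 1 \<and> x \<in> As ! Suc j}"
        by (auto simp: nth)
      then show ?thesis using sh False IA by auto
    next
      case True
      have ex: "\<exists>j. 0 < j \<and> j < r \<and> x \<notin> As ! j"
      proof (rule ccontr)
        assume "\<not> ?thesis"
        then have "{j. j < r \<and> x \<in> As ! j} = {..<r}" using True by (auto; metis gr0I)
        then have "s x = r" using cnt[OF x] by simp
        then show False using sr x r2 by fastforce
      qed
      define g0 where "g0 = fgap r As x"
      have g0: "0 < g0 \<and> g0 < r \<and> x \<notin> As ! g0"
        unfolding g0_def fgap_def using ex by (rule LeastI_ex)
      have "{j. j < r - 1 \<and> x \<in> fmap r I As ! j} = insert (g0 - 1) {j. j < r - 1 \<and> x \<in> As ! Suc j}"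
        using True g0 by (auto simp: nth g0_def)
      moreover have "g0 - 1 \<notin> {j. j < r - 1 \<and> x \<in> As ! Suc j}" using g0 by auto
      ultimately have "card {j. j < r - 1 \<and> x \<in> fmap r I As ! j} = Suc (card {j. j < r - 1 \<and> x \<in> As ! Suc j})"
        by simp
      then show ?thesis using sh True by simp
    qed
  qed
  show ?thesis using c1 c2 by (simp add: C_vertices_def fmap_def)
qed


lemma gmap_vertex:
  assumes Bs: "Bs \<in> C_vertices (r - 1) s' n (replicate (r - 1) k)"
  shows "I # Bs \<in> C_vertices r s n (replicate r k)"
proof -
  have len: "length Bs = r - 1" and sub: "\<And>j. j < r - 1 \<Longrightarrow> Bs ! j \<subseteq> {1..n}"
    and cd: "\<And>j. j < r - 1 \<Longrightarrow> k \<le> card (Bs ! j)"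
    and cnt: "\<And>x. x \<in> {1..n} \<Longrightarrow> card {j. j < r - 1 \<and> x \<in> Bs ! j} = s' x"
    using Bs by (auto simp: C_vertices_def)
  have r1: "r = Suc (r - 1)" using r2 by simp
  have c1: "(I # Bs) ! j \<subseteq> {1..n} \<and> k \<le> card ((I # Bs) ! j)" if "j < r" for j
  proof (cases j)
    case 0 then show ?thesis using Is cI by auto
  next
    case (Suc j') then show ?thesis using sub[of j'] cd[of j'] that by auto
  qed
  have c2: "card {j. j < r \<and> x \<in> (I # Bs) ! j} = s x" if x: "x \<in> {1..n}" for x
  proof -
    have "card {j. j < r \<and> x \<in> (I # Bs) ! j} = (if x \<in> I then 1 else 0) + card {j. j < r - 1 \<and> x \<in> Bs ! j}"
      using card_shift[of "r - 1" "\<lambda>j. x \<in> (I # Bs) ! j"] r1 by simp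
    then show ?thesis using cnt[OF x] Is by auto
  qed
  show ?thesis using c1 c2 len r1 by (auto simp: C_vertices_def)
qed

lemma fmap_gmap:
  assumes Bs: "Bs \<in> C_vertices (r - 1) s' n (replicate (r - 1) k)"
  shows "fmap r I (I # Bs) = Bs"
proof -
  have len: "length Bs = r - 1" using Bs by (simp add: C_vertices_def)
  show ?thesis unfolding fmap_def
    by (rule nth_equalityI) (auto simp: len)
qed

theorem main:
  shows "geom_real (induced_subcomplex (C_complex r s n (replicate r k))
             {As \<in> C_vertices r s n (replicate r k). I \<subseteq> As ! 0})
         homotopy_equivalent_space
         geom_real (C_complex (r - 1) s' n (replicate (r - 1) k))"
proof (rule simplicial_htpy_equiv[where V = "{As \<in> C_vertices r s n (replicate r k). I \<subseteq> As ! 0}"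
      and W = "C_vertices (r - 1) s' n (replicate (r - 1) k)" and f = "fmap r I" and g = "(#) I"])
  let ?VK = "{As \<in> C_vertices r s n (replicate r k). I \<subseteq> As ! 0}"
  let ?VL = "C_vertices (r - 1) s' n (replicate (r - 1) k)"
  let ?K = "induced_subcomplex (C_complex r s n (replicate r k)) ?VK"
  let ?L = "C_complex (r - 1) s' n (replicate (r - 1) k)"
  show "finite ?VK" using finite_C_vertices by simp
  show "finite ?VL" using finite_C_vertices by simp
  show "\<forall>\<sigma>\<in>?K. \<sigma> \<subseteq> ?VK" by (auto simp: induced_subcomplex_def)
  show "\<forall>\<tau>\<in>?L. \<tau> \<subseteq> ?VL" by (auto simp: C_complex_def)
  show "\<forall>\<tau>\<in>?L. \<forall>w\<in>\<tau>. fmap r I (I # w) = w"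
    using fmap_gmap by (auto simp: C_complex_def)
  have Kmem: "\<sigma> \<in> ?K \<longleftrightarrow> finite \<sigma> \<and> \<sigma> \<noteq> {} \<and> \<sigma> \<subseteq> ?VK \<and> (\<forall>j<r. k \<le> card (\<Inter>As\<in>\<sigma>. As ! j))" for \<sigma>
    by (auto simp: induced_subcomplex_def C_complex_def)
  have Lmem: "\<tau> \<in> ?L \<longleftrightarrow> finite \<tau> \<and> \<tau> \<noteq> {} \<and> \<tau> \<subseteq> ?VL \<and> (\<forall>j<r-1. k \<le> card (\<Inter>As\<in>\<tau>. As ! j))" for \<tau>
    by (auto simp: C_complex_def)
  have fV: "fmap r I As \<in> ?VL" if "As \<in> ?VK" for As using fmap_vertex that by auto
  have gV: "I # Bs \<in> ?VK" if "Bs \<in> ?VL" for Bs using gmap_vertex that by auto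
  have Vsub: "As ! j \<subseteq> {1..n}" if "As \<in> C_vertices m t n ks" "j < m" for As m t ks j
    using that by (auto simp: C_vertices_def)
  have fsup: "As ! Suc j \<subseteq> fmap r I As ! j" if "j < r - 1" for As j
    using that by (auto simp: fmap_def)
  show "\<forall>\<sigma>\<in>?K. fmap r I ` \<sigma> \<in> ?L"
  proof
    fix \<sigma> assume \<sigma>: "\<sigma> \<in> ?K"
    have sv: "\<sigma> \<subseteq> ?VK" "finite \<sigma>" "\<sigma> \<noteq> {}" "\<forall>j<r. k \<le> card (\<Inter>As\<in>\<sigma>. As ! j)"
      using \<sigma> unfolding Kmem by auto
    have "k \<le> card (\<Inter>B\<in>fmap r I ` \<sigma>. B ! j)" if j: "j < r - 1" for j
    proof -
      obtain A0 where A0: "A0 \<in> \<sigma>" using sv(3) by auto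
      have "fmap r I A0 ! j \<subseteq> {1..n}"
      proof -
        have "A0 \<in> ?VK" using A0 sv(1) by blast
        then have "fmap r I A0 \<in> ?VL" by (rule fV)
        then show ?thesis using Vsub j by blast
      qed
      then have "(\<Inter>B\<in>fmap r I ` \<sigma>. B ! j) \<subseteq> {1..n}"
        using A0 by auto
      then have fin: "finite (\<Inter>B\<in>fmap r I ` \<sigma>. B ! j)" by (rule finite_subset) simp
      have "(\<Inter>As\<in>\<sigma>. As ! Suc j) \<subseteq> (\<Inter>B\<in>fmap r I ` \<sigma>. B ! j)"
        using fsup[OF j] by auto
      then have "card (\<Inter>As\<in>\<sigma>. As ! Suc j) \<le> card (\<Inter>B\<in>fmap r I ` \<sigma>. B ! j)"
        using fin by (rule card_mono[rotated])
      moreover have "k \<le> card (\<Inter>As\<in>\<sigma>. As ! Suc j)" using sv(4) j by auto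
      ultimately show ?thesis by linarith
    qed
    moreover have "fmap r I ` \<sigma> \<subseteq> ?VL" using sv(1) fV by auto
    ultimately show "fmap r I ` \<sigma> \<in> ?L" using sv unfolding Lmem by auto
  qed
  show "\<forall>\<tau>\<in>?L. (#) I ` \<tau> \<in> ?K"
  proof
    fix \<tau> assume \<tau>: "\<tau> \<in> ?L"
    have tv: "\<tau> \<subseteq> ?VL" "finite \<tau>" "\<tau> \<noteq> {}" "\<forall>j<r-1. k \<le> card (\<Inter>As\<in>\<tau>. As ! j)"
      using \<tau> unfolding Lmem by auto
    have "k \<le> card (\<Inter>B\<in>(#) I ` \<tau>. B ! j)" if j: "j < r" for j
    proof (cases j)
      case 0
      have "(\<Inter>B\<in>(#) I ` \<tau>. B ! j) = I" using tv(3) 0 by auto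
      then show ?thesis using cI by simp
    next
      case (Suc j')
      have "(\<Inter>B\<in>(#) I ` \<tau>. B ! j) = (\<Inter>B\<in>\<tau>. B ! j')" using Suc by auto
      then show ?thesis using tv(4) Suc j by auto
    qed
    moreover have "(#) I ` \<tau> \<subseteq> ?VK" using tv(1) gV by auto
    ultimately show "(#) I ` \<tau> \<in> ?K" using tv unfolding Kmem by auto
  qed
  show "\<forall>\<sigma>\<in>?K. (#) I ` fmap r I ` \<sigma> \<union> \<sigma> \<in> ?K"
  proof
    fix \<sigma> assume \<sigma>: "\<sigma> \<in> ?K"
    have sv: "\<sigma> \<subseteq> ?VK" "finite \<sigma>" "\<sigma> \<noteq> {}" "\<forall>j<r. k \<le> card (\<Inter>As\<in>\<sigma>. As ! j)"
      using \<sigma> unfolding Kmem by auto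
    have "k \<le> card (\<Inter>B\<in>(#) I ` fmap r I ` \<sigma> \<union> \<sigma>. B ! j)" if j: "j < r" for j
    proof (cases j)
      case 0
      have "(\<Inter>B\<in>(#) I ` fmap r I ` \<sigma> \<union> \<sigma>. B ! j) = I"
      proof
        obtain A0 where A0: "A0 \<in> \<sigma>" using sv(3) by auto
        then have "I # fmap r I A0 \<in> (#) I ` fmap r I ` \<sigma> \<union> \<sigma>" by blast
        then have "(\<Inter>B\<in>(#) I ` fmap r I ` \<sigma> \<union> \<sigma>. B ! j) \<subseteq> (I # fmap r I A0) ! j"
          by (rule INT_lower)
        then show "(\<Inter>B\<in>(#) I ` fmap r I ` \<sigma> \<union> \<sigma>. B ! j) \<subseteq> I" using 0 by simp
        show "I \<subseteq> (\<Inter>B\<in>(#) I ` fmap r I ` \<sigma> \<union> \<sigma>. B ! j)" using sv(1) 0 by auto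
      qed
      then show ?thesis using cI by simp
    next
      case (Suc j')
      have "(\<Inter>B\<in>(#) I ` fmap r I ` \<sigma> \<union> \<sigma>. B ! j) = (\<Inter>B\<in>\<sigma>. B ! j)"
      proof -
        have j': "j' < r - 1" using Suc j by simp
        have "(\<Inter>B\<in>\<sigma>. B ! j) \<subseteq> (\<Inter>B\<in>(#) I ` fmap r I ` \<sigma>. B ! j)"
        proof (rule INT_greatest)
          fix B assume "B \<in> (#) I ` fmap r I ` \<sigma>"
          then obtain A where A: "A \<in> \<sigma>" "B = I # fmap r I A" by blast
          have "(\<Inter>B\<in>\<sigma>. B ! j) \<subseteq> A ! Suc j'" using A(1) Suc by (metis INT_lower)
          also have "\<dots> \<subseteq> fmap r I A ! j'" by (rule fsup[OF j'])
          finally show "(\<Inter>B\<in>\<sigma>. B ! j) \<subseteq> B ! j" using A(2) Suc by simp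
        qed
        then show ?thesis by (simp add: INT_Un Int_absorb1)
      qed
      then show ?thesis using sv(4) j by auto
    qed
    moreover have "(#) I ` fmap r I ` \<sigma> \<subseteq> ?VK" using sv fV gV by auto
    ultimately show "(#) I ` fmap r I ` \<sigma> \<union> \<sigma> \<in> ?K" using sv unfolding Kmem by auto
  qed
qed

end


theorem mainTheorem7:
  fixes r n k :: nat and s :: "nat \<Rightarrow> nat" and I :: "nat set"
  assumes "r \<ge> 2" and "n \<ge> 1" and "k \<ge> 1"
    and "\<forall>i\<in>{1..n}. s i \<le> r - 1"
    and "I \<subseteq> {i\<in>{1..n}. s i > 0}"
    and "card I \<ge> k"
  shows "geom_real (induced_subcomplex (C_complex r s n (replicate r k))
             {As \<in> C_vertices r s n (replicate r k). I \<subseteq> As ! 0})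
         homotopy_equivalent_space
         geom_real (C_complex (r - 1) (\<lambda>i. if i \<in> I then s i - 1 else s i) n (replicate (r - 1) k))"
  using main[OF assms(1) assms(3) assms(4) assms(5) assms(6)] .

end
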